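(* Let $\psi_1,\dots,\psi_L\in\mathbb R^n$ and define $\beta_\ell=n^{-1}\sum_{i=1}^n\nabla f(X_i)\psi_{\ell,i}$ for $\ell=1,\dots,L$. If $\operatorname{span}\{\psi_1,\dots,\psi_L\}=\mathbb R^n$, then there exist vectors $\bar\beta_1,\dots,\bar\beta_{m^*}\in\mathcal B^*=\{\sum_{\ell=1}^Lc_\ell\beta_\ell:\sum_{\ell}|c_\ell|\le1\}$ and constants $\mu_1,\dots,\mu_{m^*}$ (possibly depending on $n$) such that $\Pi^*\preceq\sum_{k=1}^{m^*}\mu_k\bar\beta_k\bar\beta_k^\top$.
   Context: Let $X_1,\dots,X_n\in\mathbb R^d$ and $f(x)=g(\vartheta_1^\top x,\dots,\vartheta_{m^*}^\top x)$ with $g:\mathbb R^{m^*}\to\mathbb R$ differentiable and $\vartheta_1,\dots,\vartheta_{m^*}$ orthonormal in $\mathbb R^d$. The subspace $\mathcal S=\operatorname{span}\{\nabla f(X_1),\dots,\nabla f(X_n)\}$ is assumed to have dimension $m^*$ (i.e. it coincides with the EDR subspace spanned by $\vartheta_1,\dots,\vartheta_{m^*}$), and $\Pi^*$ denotes the orthogonal projector onto $\mathcal S$. $\psi_{\ell,i}$ is the $i$th coordinate of $\psi_\ell$. $A\preceq B$ means $B-A$ is positive semidefinite. *)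

theory Defs
  imports "HOL-Analysis.Analysis"
begin

definition grad :: "('a::real_inner \<Rightarrow> real) \<Rightarrow> 'a \<Rightarrow> 'a" where
  "grad f x = (THE D. GDERIV f x :> D)"

definition is_orth_proj :: "real^'d^'d \<Rightarrow> (real^'d) set \<Rightarrow> bool" where
  "is_orth_proj P S \<longleftrightarrow> (\<forall>x. P *v x \<in> S \<and> (\<forall>y\<in>S. (x - P *v x) \<bullet> y = 0))"

definition outer :: "real^'d \<Rightarrow> real^'d \<Rightarrow> real^'d^'d" where
  "outer u v = (\<chi> i j. u $ i * v $ j)"

definition loewner_le :: "real^'d^'d \<Rightarrow> real^'d^'d \<Rightarrow> bool" where
  "loewner_le A B \<longleftrightarrow> (\<forall>x. 0 \<le> x \<bullet> ((B - A) *v x))"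

end

theory Submission imports Defs begin

lemma sum_mat_vec: "finite A \<Longrightarrow> (\<Sum>k\<in>A. M k) *v (x::real^'d) = (\<Sum>k\<in>A. M k *v x)"
  by (induction A rule: finite_induct) (auto simp: matrix_vector_mult_add_rdistrib)

lemma outer_mv: "outer u u *v x = (u \<bullet> x) *\<^sub>R u"
  by (simp add: vec_eq_iff outer_def matrix_vector_mult_def inner_vec_def sum_distrib_left mult_ac)

lemma quad_form: "x \<bullet> ((\<Sum>k\<in>UNIV. (\<mu>::'m::finite\<Rightarrow>real) k *\<^sub>R outer (b k) (b k)) *v x) = (\<Sum>k\<in>UNIV. \<mu> k * (b k \<bullet> x)^2)"
  by (simp add: sum_mat_vec scaleR_matrix_vector_assoc[symmetric] outer_mv inner_sum_right power2_eq_square inner_commute mult.assoc)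

lemma proj_quad: assumes "is_orth_proj P S" shows "x \<bullet> (P *v x) = norm (P *v x)^2"
proof -
  have "(x - P *v x) \<bullet> (P *v x) = 0" using assms unfolding is_orth_proj_def by blast
  then show ?thesis by (simp add: inner_diff_left power2_norm_eq_inner)
qed

theorem lemma1:
  fixes X :: "'n::finite \<Rightarrow> real^'d"
    and g :: "real^'m::finite \<Rightarrow> real"
    and \<theta> :: "'m \<Rightarrow> real^'d"
    and f :: "real^'d \<Rightarrow> real"
    and P :: "real^'d^'d"
    and \<psi> :: "nat \<Rightarrow> real^'n"
    and L :: nat
  assumes g_diff: "\<And>y. g differentiable (at y)"
    and orthonormal: "\<And>k k'. \<theta> k \<bullet> \<theta> k' = (if k = k' then 1 else 0)"
    and f_def: "\<And>x. f x = g (\<chi> k. \<theta> k \<bullet> x)"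
    and dimS: "dim (span (range (\<lambda>i. grad f (X i)))) = CARD('m)"
    and proj: "is_orth_proj P (span (range (\<lambda>i. grad f (X i))))"
    and span_psi: "span (\<psi> ` {..<L}) = UNIV"
  shows "\<exists>\<beta>bar :: 'm \<Rightarrow> real^'d. \<exists>\<mu> :: 'm \<Rightarrow> real.
           (\<forall>k. \<beta>bar k \<in> {\<Sum>l<L. c l *\<^sub>R
                   ((1 / real CARD('n)) *\<^sub>R (\<Sum>i\<in>UNIV. (\<psi> l $ i) *\<^sub>R grad f (X i)))
                 | c. (\<Sum>l<L. \<bar>c l\<bar>) \<le> 1})
         \<and> loewner_le P (\<Sum>k\<in>UNIV. \<mu> k *\<^sub>R outer (\<beta>bar k) (\<beta>bar k))"
proof -
  define S where "S = span (range (\<lambda>i. grad f (X i)))"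
  define G where "G = (\<lambda>v::real^'n. \<Sum>i\<in>UNIV. (v $ i) *\<^sub>R grad f (X i))"
  define bl where "bl = (\<lambda>l. (1 / real CARD('n)) *\<^sub>R G (\<psi> l))"
  have linG: "linear G" unfolding G_def
    by (intro linearI) (simp_all add: scaleR_add_left sum.distrib scaleR_sum_right)
  have blS: "bl l \<in> S" for l
    unfolding bl_def G_def S_def
    by (intro span_scale span_sum) (auto intro: span_base)
  have sub1: "span (bl ` {..<L}) \<subseteq> S"
    using blS unfolding S_def by (intro span_minimal) auto
  have Gpsi: "G (\<psi> l) \<in> span (bl ` {..<L})" if "l < L" for l
  proof -
    have "G (\<psi> l) = real CARD('n) *\<^sub>R bl l" by (simp add: bl_def)
    moreover have "bl l \<in> span (bl ` {..<L})" using that by (intro span_base) auto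
    ultimately show ?thesis by (simp add: span_scale)
  qed
  have "G ` span (\<psi> ` {..<L}) \<subseteq> span (bl ` {..<L})"
    unfolding span_linear_image[OF linG, symmetric] using Gpsi
    by (intro span_minimal) (auto)
  then have GU: "G v \<in> span (bl ` {..<L})" for v using span_psi by auto
  have Gax: "G (axis i 1) = grad f (X i)" for i
  proof -
    have "G (axis i 1) = (\<Sum>j\<in>UNIV. if j = i then grad f (X j) else 0)"
      unfolding G_def axis_def by (intro sum.cong) auto
    then show ?thesis by simp
  qed
  have sub2: "S \<subseteq> span (bl ` {..<L})"
    unfolding S_def
  proof (rule span_minimal)
    show "range (\<lambda>i. grad f (X i)) \<subseteq> span (bl ` {..<L})"
    proof
      fix z assume "z \<in> range (\<lambda>i. grad f (X i))"
      then obtain i where "z = grad f (X i)" by blast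
      then show "z \<in> span (bl ` {..<L})" using GU[of "axis i 1"] Gax[of i] by simp
    qed
  qed simp
  have SB: "span (bl ` {..<L}) = S" using sub1 sub2 by blast
  obtain B where B: "B \<subseteq> bl ` {..<L}" "independent B" "bl ` {..<L} \<subseteq> span B"
    using maximal_independent_subset by blast
  have spanB: "span B = S"
    using B SB by (metis span_minimal span_mono subspace_span subset_antisym)
  have finB: "finite B" using B(1) finite_subset by blast
  have cardB: "card B = CARD('m)"
    using dimS spanB dim_span_eq_card_independent[OF B(2)] S_def by simp
  obtain h where h: "bij_betw h (UNIV::'m set) B"
    using finite_same_card_bij[of "UNIV::'m set" B] finB cardB by auto
  define T where "T = (\<lambda>x::real^'d. \<chi> k::'m. h k \<bullet> x)"
  have linT: "bounded_linear T" unfolding T_def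
    by (intro bounded_linearI') (auto simp: vec_eq_iff inner_add_right)
  have injT: "\<forall>x\<in>S. T x = 0 \<longrightarrow> x = 0"
  proof (intro ballI impI)
    fix x assume xS: "x \<in> S" and "T x = 0"
    then have "\<forall>k. h k \<bullet> x = 0" by (simp add: T_def vec_eq_iff)
    then have "\<forall>y\<in>B. orthogonal x y" using h
      by (auto simp: bij_betw_def orthogonal_def inner_commute)
    then have "orthogonal x x" using xS spanB orthogonal_to_span by blast
    then show "x = 0" by (simp add: orthogonal_def)
  qed
  obtain e where e: "e > 0" "\<forall>x\<in>S. norm (T x) \<ge> e * norm x"
    using injective_imp_isometric[OF closed_subspace[of S] _ linT injT] S_def by auto
  define \<mu> where "\<mu> = (\<lambda>k::'m. 1 / e^2)"
  have hS: "h k \<in> S" for k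
  proof -
    have "h k \<in> bl ` {..<L}" using h B(1) by (auto simp: bij_betw_def)
    then show ?thesis using blS by (metis imageE)
  qed
  have mem: "h k \<in> {\<Sum>l<L. c l *\<^sub>R
                   ((1 / real CARD('n)) *\<^sub>R (\<Sum>i\<in>UNIV. (\<psi> l $ i) *\<^sub>R grad f (X i)))
                 | c. (\<Sum>l<L. \<bar>c l\<bar>) \<le> 1}" for k
  proof -
    obtain l where l: "l < L" "h k = bl l" using h B(1) by (auto simp: bij_betw_def)
    define c where "c = (\<lambda>j. if j = l then 1 else (0::real))"
    have "(\<Sum>j<L. \<bar>c j\<bar>) = 1" using l by (simp add: c_def if_distrib sum.delta cong: if_cong)
    moreover have "h k = (\<Sum>j<L. c j *\<^sub>R
                   ((1 / real CARD('n)) *\<^sub>R (\<Sum>i\<in>UNIV. (\<psi> j $ i) *\<^sub>R grad f (X i))))"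
    proof -
      have "(\<Sum>j<L. c j *\<^sub>R
                   ((1 / real CARD('n)) *\<^sub>R (\<Sum>i\<in>UNIV. (\<psi> j $ i) *\<^sub>R grad f (X i))))
            = (\<Sum>j<L. if j = l then bl j else 0)"
        unfolding c_def bl_def G_def by (intro sum.cong) auto
      then show ?thesis using l by simp
    qed
    ultimately show ?thesis by force
  qed
  have "loewner_le P (\<Sum>k\<in>UNIV. \<mu> k *\<^sub>R outer (h k) (h k))"
    unfolding loewner_le_def
  proof
    fix x :: "real^'d"
    let ?y = "P *v x"
    have yS: "?y \<in> S" using proj unfolding is_orth_proj_def S_def by blast
    have orth: "(x - ?y) \<bullet> z = 0" if "z \<in> S" for z
      using proj that unfolding is_orth_proj_def S_def by blast
    have hx: "h k \<bullet> x = h k \<bullet> ?y" for k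
      using orth[OF hS[of k]] by (simp add: inner_diff_left inner_diff_right inner_commute)
    have nT: "norm (T ?y)^2 = (\<Sum>k\<in>UNIV. (h k \<bullet> ?y)^2)"
      unfolding T_def by (simp add: norm_vec_def L2_set_def sum_nonneg)
    have "e * norm ?y \<le> norm (T ?y)" using e yS by blast
    then have "(e * norm ?y)^2 \<le> norm (T ?y)^2" by (intro power_mono) (use e(1) in simp_all)
    then have "norm ?y ^2 \<le> (1/e^2) * norm (T ?y)^2" using e(1)
      by (simp add: field_simps power_mult_distrib)
    then have "norm ?y ^2 \<le> (\<Sum>k\<in>UNIV. \<mu> k * (h k \<bullet> x)^2)"
      by (simp add: nT hx \<mu>_def sum_distrib_left)
    then show "0 \<le> x \<bullet> (((\<Sum>k\<in>UNIV. \<mu> k *\<^sub>R outer (h k) (h k)) - P) *v x)"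
      by (simp add: matrix_vector_mult_diff_rdistrib inner_diff_right quad_form proj_quad[OF proj])
  qed
  then show ?thesis using mem by blast
qed

end
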